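(* Let $D$ be a nondegenerate dendrite and let $f\colon D\to D$ be continuous. Suppose $p$ and $q$ are two distinct endpoints of $D$ fixed by $f$, such that $p$ is not a weakly repelling fixed point of $f$ for $D\setminus\{p\}$ and $q$ is not a weakly repelling fixed point of $f$ for $D\setminus\{q\}$. Then there exists a cutpoint $r$ of $D$ with $r\in(p,q)$ and $f(r)=r$.
   Context: A dendrite is a locally connected continuum containing no simple closed curve; $[x,y]$ is the unique arc from $x$ to $y$ and $(x,y)=[x,y]\setminus\{x,y\}$. An endpoint is a point $x$ with $D\setminus\{x\}$ connected; a cutpoint is a point $x$ with $D\setminus\{x\}$ disconnected. A point $x$ separates $a$ and $b$ if they lie in different components of $D\setminus\{x\}$. If $a\in D$ is fixed by $f$ and $B$ is a component of $D\setminus\{a\}$, then $a$ is a weakly repelling fixed point of $f$ for $B$ if at least one of the following holds: in $B$, arbitrarily close to $a$, there is a cutpoint of $D$ fixed by $f$; or in $B$, arbitrarily close to $a$, there is a cutpoint $x$ of $D$ separating $a$ from $f(x)$. *)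

theory Defs
  imports "HOL-Analysis.Analysis"
begin

definition dendrite :: "'a::metric_space set \<Rightarrow> bool" where
  "dendrite D \<longleftrightarrow> D \<noteq> {} \<and> compact D \<and> connected D \<and> locally connected D \<and>
     \<not> (\<exists>g. simple_path g \<and> pathfinish g = pathstart g \<and> path_image g \<subseteq> D)"

definition nondegenerate :: "'a set \<Rightarrow> bool" where
  "nondegenerate D \<longleftrightarrow> (\<exists>x\<in>D. \<exists>y\<in>D. x \<noteq> y)"

text \<open>The arc [x,y] in D (unique in a dendrite).\<close>
definition darc :: "'a::metric_space set \<Rightarrow> 'a \<Rightarrow> 'a \<Rightarrow> 'a set" where
  "darc D x y = (if x = y then {x} else
     {z. \<exists>g. arc g \<and> path_image g \<subseteq> D \<and> pathstart g = x \<and> pathfinish g = y \<and> z \<in> path_image g})"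

definition open_darc :: "'a::metric_space set \<Rightarrow> 'a \<Rightarrow> 'a \<Rightarrow> 'a set" where
  "open_darc D x y = darc D x y - {x, y}"

definition endpoint :: "'a::topological_space set \<Rightarrow> 'a \<Rightarrow> bool" where
  "endpoint D x \<longleftrightarrow> x \<in> D \<and> connected (D - {x})"

definition cutpoint :: "'a::topological_space set \<Rightarrow> 'a \<Rightarrow> bool" where
  "cutpoint D x \<longleftrightarrow> x \<in> D \<and> \<not> connected (D - {x})"

definition separates :: "'a::topological_space set \<Rightarrow> 'a \<Rightarrow> 'a \<Rightarrow> 'a \<Rightarrow> bool" where
  "separates D x a b \<longleftrightarrow> a \<in> D - {x} \<and> b \<in> D - {x} \<and>
     connected_component_set (D - {x}) a \<noteq> connected_component_set (D - {x}) b"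

definition weakly_repelling :: "'a::metric_space set \<Rightarrow> ('a \<Rightarrow> 'a) \<Rightarrow> 'a \<Rightarrow> 'a set \<Rightarrow> bool" where
  "weakly_repelling D f a B \<longleftrightarrow>
     (\<forall>e>0. \<exists>x\<in>B. dist x a < e \<and> cutpoint D x \<and> f x = x) \<or>
     (\<forall>e>0. \<exists>x\<in>B. dist x a < e \<and> cutpoint D x \<and> separates D x a (f x))"

end

theory Submission
  imports Defs
begin



inductive echain :: "'a::metric_space set \<Rightarrow> real \<Rightarrow> 'a \<Rightarrow> 'a \<Rightarrow> bool" for C \<delta> where
  ech_refl: "u \<in> C \<Longrightarrow> echain C \<delta> u u"
| ech_step: "echain C \<delta> u w \<Longrightarrow> v \<in> C \<Longrightarrow> dist w v < \<delta> \<Longrightarrow> echain C \<delta> u v"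

lemma echain_mem: "echain C \<delta> u v \<Longrightarrow> u \<in> C \<and> v \<in> C"
  by (induction rule: echain.induct) auto

lemma echain_trans: "echain C \<delta> w v \<Longrightarrow> echain C \<delta> u w \<Longrightarrow> echain C \<delta> u v"
  by (induction rule: echain.induct) (auto intro: ech_step)

lemma echain_sym: "echain C \<delta> u v \<Longrightarrow> 0 < \<delta> \<Longrightarrow> echain C \<delta> v u"
proof (induction rule: echain.induct)
  case (ech_refl u)
  then show ?case by (simp add: echain.ech_refl)
next
  case (ech_step u w v)
  have "echain C \<delta> v w"
    using ech_step echain_mem[OF ech_step(1)] 
    by (metis dist_commute echain.ech_refl echain.ech_step)
  then show ?case using ech_step echain_trans by metis
qed

lemma echain_connected:
  assumes "connected C" "u \<in> C" "v \<in> C" "0 < \<delta>"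
  shows "echain C \<delta> u v"
proof (rule connected_equivalence_relation[OF assms(1-3)])
  show "\<And>x y. echain C \<delta> x y \<Longrightarrow> x \<in> C \<Longrightarrow> y \<in> C \<Longrightarrow> echain C \<delta> y x"
    using echain_sym assms(4) by blast
  show "\<And>x y z. echain C \<delta> x y \<Longrightarrow> echain C \<delta> y z \<Longrightarrow> x \<in> C \<Longrightarrow> y \<in> C \<Longrightarrow> z \<in> C \<Longrightarrow> echain C \<delta> x z"
    using echain_trans by blast
  fix a assume a: "a \<in> C"
  show "\<exists>T. openin (top_of_set C) T \<and> a \<in> T \<and> (\<forall>x\<in>T. echain C \<delta> a x)"
  proof (intro exI conjI)
    show "openin (top_of_set C) (C \<inter> ball a \<delta>)" by (simp add: openin_open_Int)
    show "a \<in> C \<inter> ball a \<delta>" using a assms(4) by simp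
    show "\<forall>x\<in>C \<inter> ball a \<delta>. echain C \<delta> a x"
      using a by (auto intro: ech_step ech_refl)
  qed
qed

lemma echain_fun:
  assumes "echain C \<delta> u v" "0 < \<delta>"
  shows "\<exists>k. \<forall>M\<ge>k. \<exists>z. z 0 = u \<and> z M = v \<and> (\<forall>j\<le>M. z j \<in> C) \<and> (\<forall>j<M. dist (z j) (z (Suc j)) < \<delta>)"
  using assms
proof (induction rule: echain.induct)
  case (ech_refl u)
  then show ?case by (intro exI[of _ 0]) (auto intro!: exI[of _ "\<lambda>_. u"])
next
  case (ech_step u w v)
  then obtain k where k: "\<forall>M\<ge>k. \<exists>z. z 0 = u \<and> z M = w \<and> (\<forall>j\<le>M. z j \<in> C) \<and> (\<forall>j<M. dist (z j) (z (Suc j)) < \<delta>)"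
    by blast
  show ?case
  proof (intro exI[of _ "Suc k"] allI impI)
    fix M assume M: "Suc k \<le> M"
    then obtain z where z: "z 0 = u" "z (M-1) = w" "\<forall>j\<le>M-1. z j \<in> C" "\<forall>j<M-1. dist (z j) (z (Suc j)) < \<delta>"
      using k M by (metis Suc_le_D diff_Suc_1 Suc_le_mono)
    define z' where "z' j = (if j < M then z j else v)" for j
    have "z' 0 = u" using z M by (simp add: z'_def)
    moreover have "z' M = v" by (simp add: z'_def)
    moreover have "\<forall>j\<le>M. z' j \<in> C" using z ech_step.hyps(2) by (auto simp: z'_def)
    moreover have "\<forall>j<M. dist (z' j) (z' (Suc j)) < \<delta>"
    proof (intro allI impI)
      fix j assume j: "j < M"
      show "dist (z' j) (z' (Suc j)) < \<delta>"
      proof (cases "Suc j < M")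
        case True then show ?thesis using z j by (simp add: z'_def)
      next
        case False then have "j = M - 1" using j by simp
        then show ?thesis using z j ech_step.hyps(3) False by (simp add: z'_def)
      qed
    qed
    ultimately show "\<exists>z. z 0 = u \<and> z M = v \<and> (\<forall>j\<le>M. z j \<in> C) \<and> (\<forall>j<M. dist (z j) (z (Suc j)) < \<delta>)"
      by blast
  qed
qed



lemma ulc:
  fixes D :: "'a::metric_space set"
  assumes "compact D" "locally connected D" "0 < \<epsilon>"
  shows "\<exists>\<delta>>0. \<forall>y\<in>D. \<forall>z\<in>D. dist y z < \<delta> \<longrightarrow>
           (\<exists>C. connected C \<and> C \<subseteq> D \<and> y \<in> C \<and> z \<in> C \<and> (\<forall>w\<in>C. dist y w < \<epsilon>))"
proof (cases "D = {}")
  case True then show ?thesis by (auto intro: exI[of _ 1])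
next
  case False
  have "\<forall>w\<in>D. \<exists>Op. open Op \<and> w \<in> Op \<and> connected (D \<inter> Op) \<and> D \<inter> Op \<subseteq> ball w (\<epsilon>/2)"
  proof
    fix w assume w: "w \<in> D"
    have "openin (top_of_set D) (D \<inter> ball w (\<epsilon>/2))" by (simp add: openin_open_Int)
    moreover have "w \<in> D \<inter> ball w (\<epsilon>/2)" using w assms(3) by simp
    ultimately obtain U where U: "openin (top_of_set D) U" "connected U" "w \<in> U" "U \<subseteq> D \<inter> ball w (\<epsilon>/2)"
      using assms(2) unfolding locally_connected by blast
    then obtain Op where "open Op" "U = D \<inter> Op" by (meson openin_open)
    then show "\<exists>Op. open Op \<and> w \<in> Op \<and> connected (D \<inter> Op) \<and> D \<inter> Op \<subseteq> ball w (\<epsilon>/2)"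
      using U by blast
  qed
  then obtain Op where Op: "\<And>w. w \<in> D \<Longrightarrow> open (Op w) \<and> w \<in> Op w \<and> connected (D \<inter> Op w) \<and> D \<inter> Op w \<subseteq> ball w (\<epsilon>/2)"
    by metis
  have "D \<subseteq> \<Union>(Op ` D)" using Op by blast
  moreover have "Op ` D \<noteq> {}" using False by simp
  moreover have opn: "\<And>B. B \<in> Op ` D \<Longrightarrow> open B" using Op by blast
  ultimately obtain \<delta> where \<delta>: "0 < \<delta>" "\<And>T. \<lbrakk>T \<subseteq> D; diameter T < \<delta>\<rbrakk> \<Longrightarrow> \<exists>B \<in> Op ` D. T \<subseteq> B"
    using Lebesgue_number_lemma[OF assms(1)] by metis
  show ?thesis
  proof (rule exI[of _ \<delta>], intro conjI ballI impI)
    show "0 < \<delta>" by fact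
    fix y z assume yz: "y \<in> D" "z \<in> D" "dist y z < \<delta>"
    have "diameter {y, z} \<le> dist y z"
      unfolding diameter_def by (simp add: dist_commute) (rule cSup_least, auto)
    then obtain w where w: "w \<in> D" "{y,z} \<subseteq> Op w" using \<delta>(2)[of "{y,z}"] yz by force
    show "\<exists>C. connected C \<and> C \<subseteq> D \<and> y \<in> C \<and> z \<in> C \<and> (\<forall>w\<in>C. dist y w < \<epsilon>)"
    proof (intro exI conjI ballI)
      show "connected (D \<inter> Op w)" using Op w by blast
      show "D \<inter> Op w \<subseteq> D" by blast
      show "y \<in> D \<inter> Op w" "z \<in> D \<inter> Op w" using w yz by auto
      fix c assume c: "c \<in> D \<inter> Op w"
      have "dist w y < \<epsilon>/2" "dist w c < \<epsilon>/2" using Op[OF w(1)] c \<open>y \<in> D \<inter> Op w\<close> by auto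
      then show "dist y c < \<epsilon>"
        by (metis dist_commute dist_triangle_half_l)
    qed
  qed
qed


lemma refine:
  fixes D :: "'a::metric_space set"
  assumes ulc: "\<forall>y\<in>D. \<forall>z\<in>D. dist y z < \<delta> \<longrightarrow> (\<exists>C. connected C \<and> C \<subseteq> D \<and> y \<in> C \<and> z \<in> C \<and> (\<forall>w\<in>C. dist y w < \<epsilon>))"
    and "0 < \<delta>'" "0 < \<epsilon>" and hD: "\<forall>j\<le>N. h j \<in> D" and hd: "\<forall>j<N. dist (h j) (h (Suc j)) < \<delta>"
  shows "\<exists>M>0. \<exists>h'. (\<forall>l\<le>N*M. h' l \<in> D \<and> dist (h (l div M)) (h' l) < \<epsilon>) \<and>
             (\<forall>l<N*M. dist (h' l) (h' (Suc l)) < \<delta>') \<and> h' 0 = h 0 \<and> h' (N*M) = h N"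
proof -
  have "\<exists>C. connected C \<and> C \<subseteq> D \<and> h i \<in> C \<and> h (Suc i) \<in> C \<and> (\<forall>w\<in>C. dist (h i) w < \<epsilon>)"
    if i: "i < N" for i
    using ulc hD hd i by (meson Suc_leI less_imp_le_nat)
  then obtain C where C: "\<And>i. i < N \<Longrightarrow> connected (C i) \<and> C i \<subseteq> D \<and> h i \<in> C i \<and> h (Suc i) \<in> C i \<and> (\<forall>w\<in>C i. dist (h i) w < \<epsilon>)"
    by metis
  have "\<exists>k. \<forall>M\<ge>k. \<exists>z. z 0 = h i \<and> z M = h (Suc i) \<and> (\<forall>j\<le>M. z j \<in> C i) \<and> (\<forall>j<M. dist (z j) (z (Suc j)) < \<delta>')"
    if i: "i < N" for i
  proof -
    have "echain (C i) \<delta>' (h i) (h (Suc i))"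
      using C[OF i] \<open>0 < \<delta>'\<close> by (intro echain_connected) auto
    then show ?thesis using echain_fun \<open>0 < \<delta>'\<close> by blast
  qed
  then obtain k where k: "\<And>i M. i < N \<Longrightarrow> M \<ge> k i \<Longrightarrow> \<exists>z. z 0 = h i \<and> z M = h (Suc i) \<and> (\<forall>j\<le>M. z j \<in> C i) \<and> (\<forall>j<M. dist (z j) (z (Suc j)) < \<delta>')"
    by metis
  define M where "M = Suc (\<Sum>i<N. k i)"
  have kM: "k i \<le> M" if "i < N" for i
  proof -
    have "k i \<le> (\<Sum>i<N. k i)" using that by (intro member_le_sum) auto
    then show ?thesis by (simp add: M_def)
  qed
  have "\<exists>z. z 0 = h i \<and> z M = h (Suc i) \<and> (\<forall>j\<le>M. z j \<in> C i) \<and> (\<forall>j<M. dist (z j) (z (Suc j)) < \<delta>')"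
    if i: "i < N" for i
    using k[OF i kM[OF i]] .
  then obtain z where z: "\<And>i. i < N \<Longrightarrow> z i 0 = h i \<and> z i M = h (Suc i) \<and> (\<forall>j\<le>M. z i j \<in> C i) \<and> (\<forall>j<M. dist (z i j) (z i (Suc j)) < \<delta>')"
    by metis
  have M0: "M > 0" by (simp add: M_def)
  define h' where "h' l = (if l < N*M then z (l div M) (l mod M) else h N)" for l
  have A: "h' l \<in> D \<and> dist (h (l div M)) (h' l) < \<epsilon>" if "l \<le> N*M" for l
  proof (cases "l < N*M")
    case True
    then have i: "l div M < N" by (simp add: div_less_iff_less_mult M0 mult.commute)
    have "l mod M \<le> M" using M0 by simp
    then have "z (l div M) (l mod M) \<in> C (l div M)" using z[OF i] by blast
    then show ?thesis using C[OF i] True by (auto simp: h'_def)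
  next
    case False
    then have "l = N*M" using that by simp
    then show ?thesis using hD \<open>0 < \<epsilon>\<close> M0 by (simp add: h'_def)
  qed
  have B: "dist (h' l) (h' (Suc l)) < \<delta>'" if l: "l < N*M" for l
  proof -
    define i where "i = l div M"
    define j where "j = l mod M"
    have i: "i < N" using l by (simp add: i_def div_less_iff_less_mult M0 mult.commute)
    have lm: "j < M" using M0 by (simp add: j_def)
    have ldec: "l = i * M + j" by (simp add: i_def j_def)
    have zi: "z i 0 = h i" "z i M = h (Suc i)" "\<And>j. j < M \<Longrightarrow> dist (z i j) (z i (Suc j)) < \<delta>'"
      using z[OF i] by blast+
    have hl: "h' l = z i j" using l by (simp add: h'_def i_def j_def)
    show ?thesis
    proof (cases "Suc j < M")
      case True
      have e1: "Suc l mod M = Suc j" using True by (simp add: j_def mod_Suc)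
      have e2: "Suc l div M = i" using True by (simp add: i_def j_def div_Suc mod_Suc)
      have "Suc l < i * M + M" using ldec True by linarith
      moreover have "i * M + M \<le> N * M" using i
        by (metis Suc_leI mult_Suc mult_le_mono1 add.commute)
      ultimately have "Suc l < N*M" by linarith
      then have "h' (Suc l) = z i (Suc j)" using e1 e2 by (simp add: h'_def)
      then show ?thesis using hl zi(3)[OF lm] by simp
    next
      case False
      then have jM: "Suc j = M" using lm by simp
      have e2: "Suc l div M = Suc i" using jM by (simp add: i_def j_def div_Suc mod_Suc)
      have e1: "Suc l mod M = 0" using jM by (simp add: j_def mod_Suc)
      have v: "h' (Suc l) = h (Suc i)"
      proof (cases "Suc l < N*M")
        case True
        then have "Suc i < N" using e2 by (metis div_less_iff_less_mult M0 mult.commute)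
        then have "z (Suc i) 0 = h (Suc i)" using z by blast
        then show ?thesis using True e1 e2 by (simp add: h'_def)
      next
        case False
        then have "Suc l = N*M" using l by simp
        then have "Suc i = N" using e2 M0 by simp
        then show ?thesis using False by (simp add: h'_def)
      qed
      have "dist (z i j) (z i (Suc j)) < \<delta>'" using zi(3)[OF lm] .
      then show ?thesis using hl v zi(2) jM by simp
    qed
  qed
  have "h' 0 = h 0"
  proof (cases "0 < N*M")
    case True then show ?thesis using z[of 0] M0 by (simp add: h'_def)
  next
    case False then have "N = 0" using M0 by simp
    then show ?thesis by (simp add: h'_def)
  qed
  moreover have "h' (N*M) = h N" by (simp add: h'_def)
  ultimately show ?thesis using A B M0 by blast
qed



lemma geom_dist:
  fixes s :: "nat \<Rightarrow> 'a::metric_space"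
  assumes "\<And>n. dist (s n) (s (Suc n)) \<le> c * (1/2)^n"
  shows "dist (s n) (s (n+k)) \<le> 2*c*(1/2)^n - 2*c*(1/2)^(n+k)"
proof (induction k)
  case 0 then show ?case by simp
next
  case (Suc k)
  have "dist (s n) (s (n + Suc k)) \<le> dist (s n) (s (n+k)) + dist (s (n+k)) (s (Suc (n+k)))"
    by (simp add: dist_triangle)
  also have "\<dots> \<le> 2*c*(1/2)^n - 2*c*(1/2)^(n+k) + c * (1/2)^(n+k)"
    using Suc assms[of "n+k"] by linarith
  also have "\<dots> = 2*c*(1/2)^n - 2*c*(1/2)^(n + Suc k)"
  proof -
    have "(1/2::real)^(n + Suc k) = (1/2)^(n+k) / 2" by simp
    then show ?thesis by simp
  qed
  finally show ?case .
qed

lemma geom_lim: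
  fixes s :: "nat \<Rightarrow> 'a::metric_space"
  assumes "compact D" "\<And>n. s n \<in> D" "\<And>n. dist (s n) (s (Suc n)) \<le> c * (1/2)^n" "0 < c"
  shows "s \<longlonglongrightarrow> lim s \<and> lim s \<in> D \<and> (\<forall>n. dist (s n) (lim s) \<le> 2*c*(1/2)^n)"
proof -
  have d: "dist (s n) (s m) \<le> 2*c*(1/2)^n" if nm: "n \<le> m" for n m
  proof -
    obtain k where "m = n + k" using le_Suc_ex[OF nm] by blast
    moreover have "0 \<le> 2*c*(1/2)^(n+k)" using assms(4) by simp
    ultimately show ?thesis using geom_dist[OF assms(3), of n k] by simp
  qed
  have "Cauchy s"
  proof (rule metric_CauchyI)
    fix e :: real assume e: "0 < e"
    have pos: "0 < e / (4*c)" using e assms(4) by simp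
    have "\<exists>M. (1/2::real)^M < e / (4*c)" by (rule real_arch_pow_inv[OF pos]) simp
    then obtain M where M: "(1/2::real)^M < e / (4*c)" by blast
    have "(1/2::real)^M * (4*c) < e" using M assms(4) by (simp add: less_divide_eq)
    then have M': "4*c*(1/2::real)^M < e" by (simp add: mult.commute)
    show "\<exists>M. \<forall>m\<ge>M. \<forall>n\<ge>M. dist (s m) (s n) < e"
    proof (intro exI allI impI)
      fix m n assume "M \<le> m" "M \<le> n"
      then have "dist (s M) (s m) \<le> 2*c*(1/2)^M" "dist (s M) (s n) \<le> 2*c*(1/2)^M" using d by blast+
      then have "dist (s m) (s n) \<le> 4*c*(1/2)^M" using dist_triangle3[of "s m" "s n" "s M"] by linarith
      then show "dist (s m) (s n) < e" using M' by linarith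
    qed
  qed
  moreover have "complete D" by (rule compact_imp_complete[OF assms(1)])
  ultimately have "\<exists>l\<in>D. s \<longlonglongrightarrow> l" using assms(2) unfolding complete_def by blast
  then obtain l where l: "l \<in> D" "s \<longlonglongrightarrow> l" by blast
  then have ll: "lim s = l" by (simp add: limI)
  have "dist (s n) l \<le> 2*c*(1/2)^n" for n
  proof (rule LIMSEQ_le_const2)
    show "(\<lambda>m. dist (s n) (s m)) \<longlonglongrightarrow> dist (s n) l" by (intro tendsto_intros l)
    show "\<exists>N. \<forall>m\<ge>N. dist (s n) (s m) \<le> 2*c*(1/2)^n" using d by (intro exI[of _ n]) blast
  qed
  then show ?thesis using l ll by simp
qed


lemma floor_div_aux:
  assumes "0 \<le> t" "0 < M"
  shows "nat \<lfloor>t * real (N*M)\<rfloor> div M = nat \<lfloor>t * real N\<rfloor>"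
proof -
  have "\<lfloor>t * real (N*M)\<rfloor> div int M = \<lfloor>t * real (N*M) / real_of_int (int M)\<rfloor>"
    by (rule floor_divide_real_eq_div[symmetric]) simp
  also have "t * real (N*M) / real_of_int (int M) = t * real N" using assms by simp
  finally have "\<lfloor>t * real (N*M)\<rfloor> div int M = \<lfloor>t * real N\<rfloor>" .
  moreover have "0 \<le> \<lfloor>t * real (N*M)\<rfloor>" using assms by simp
  ultimately show ?thesis by (metis nat_div_distrib nat_int)
qed

lemma floor_close:
  fixes a b :: real
  assumes "0 \<le> a" "0 \<le> b" "\<bar>a - b\<bar> < 1"
  shows "nat \<lfloor>a\<rfloor> = nat \<lfloor>b\<rfloor> \<or> nat \<lfloor>a\<rfloor> = Suc (nat \<lfloor>b\<rfloor>) \<or> nat \<lfloor>b\<rfloor> = Suc (nat \<lfloor>a\<rfloor>)"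
proof -
  have "real_of_int \<lfloor>a\<rfloor> \<le> a" "a < real_of_int \<lfloor>a\<rfloor> + 1" by linarith+
  moreover have "real_of_int \<lfloor>b\<rfloor> \<le> b" "b < real_of_int \<lfloor>b\<rfloor> + 1" by linarith+
  moreover have ab: "a - b < 1" "b - a < 1" using assms(3) by (auto simp: abs_less_iff)
  ultimately have "a < real_of_int \<lfloor>b\<rfloor> + 2" "b < real_of_int \<lfloor>a\<rfloor> + 2" by linarith+
  then have "\<lfloor>a\<rfloor> < \<lfloor>b\<rfloor> + 2" "\<lfloor>b\<rfloor> < \<lfloor>a\<rfloor> + 2" by (simp_all add: floor_less_iff)
  moreover have "0 \<le> \<lfloor>a\<rfloor>" "0 \<le> \<lfloor>b\<rfloor>" using assms by auto
  ultimately show ?thesis by linarith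
qed




lemma nat_floor_le:
  assumes "0 \<le> t" "t \<le> 1"
  shows "nat \<lfloor>t * real N\<rfloor> \<le> N"
proof -
  have "t * real N \<le> real N" using assms by (simp add: mult_left_le_one_le)
  then have "\<lfloor>t * real N\<rfloor> \<le> int N" by (simp add: floor_le_iff)
  then show ?thesis by simp
qed

lemma construct_path:
  fixes D :: "'a::metric_space set"
  assumes D: "compact D" and c: "0 < c"
    and ulc: "\<And>n. \<forall>y\<in>D. \<forall>z\<in>D. dist y z < \<delta> n \<longrightarrow> (\<exists>C. connected C \<and> C \<subseteq> D \<and> y \<in> C \<and> z \<in> C \<and> (\<forall>w\<in>C. dist y w < c*(1/2)^n))"
    and \<delta>pos: "\<And>n. 0 < \<delta> n" and \<delta>le: "\<And>n. \<delta> n \<le> c*(1/2)^n"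
    and xy: "x \<in> D" "y \<in> D" "dist x y < \<delta> 0"
  shows "\<exists>p. path p \<and> path_image p \<subseteq> D \<inter> cball x (3*c) \<and> pathstart p = x \<and> pathfinish p = y"
proof -
  define P where "P n = (\<lambda>(N::nat, h::nat \<Rightarrow> 'a). 0 < N \<and> (\<forall>j\<le>N. h j \<in> D) \<and> (\<forall>j<N. dist (h j) (h (Suc j)) < \<delta> n) \<and> h 0 = x \<and> h N = y \<and> (n = 0 \<longrightarrow> N = 1))" for n
  define Q where "Q n = (\<lambda>(N::nat, h::nat \<Rightarrow> 'a) (N', h'). \<exists>M>0. N' = N*M \<and> (\<forall>l\<le>N'. dist (h (l div M)) (h' l) < c*(1/2)^n))" for n
  have "\<exists>F. \<forall>n. P n (F n) \<and> Q n (F n) (F (Suc n))"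
  proof (rule dependent_nat_choice)
    show "\<exists>x. P 0 x"
    proof (intro exI)
      show "P 0 (1, \<lambda>j. if j = 0 then x else y)" using xy by (auto simp: P_def)
    qed
  next
    fix Nh n assume Pn: "P n Nh"
    obtain N h where Nh: "Nh = (N, h)" by (cases Nh) blast
    have N: "0 < N" "\<forall>j\<le>N. h j \<in> D" "\<forall>j<N. dist (h j) (h (Suc j)) < \<delta> n" "h 0 = x" "h N = y"
      using Pn by (auto simp: P_def Nh)
    have "0 < c*(1/2::real)^n" using c by simp
    from refine[OF ulc[of n] \<delta>pos[of "Suc n"] this N(2) N(3)]
    obtain M h' where Mh: "M > 0" "\<forall>l\<le>N*M. h' l \<in> D \<and> dist (h (l div M)) (h' l) < c*(1/2)^n"
      "\<forall>l<N*M. dist (h' l) (h' (Suc l)) < \<delta> (Suc n)" "h' 0 = h 0" "h' (N*M) = h N"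
      by blast
    show "\<exists>y. P (Suc n) y \<and> Q n Nh y"
    proof (intro exI conjI)
      show "P (Suc n) (N*M, h')" using Mh N by (auto simp: P_def)
      show "Q n Nh (N*M, h')" using Mh by (auto simp: Q_def Nh)
    qed
  qed
  then obtain F where F: "\<And>n. P n (F n)" "\<And>n. Q n (F n) (F (Suc n))" by blast
  define NN where "NN n = fst (F n)" for n
  define H where "H n = snd (F n)" for n
  have FF: "F n = (NN n, H n)" for n by (simp add: NN_def H_def)
  have PF: "0 < NN n" "\<And>j. j \<le> NN n \<Longrightarrow> H n j \<in> D" "\<And>j. j < NN n \<Longrightarrow> dist (H n j) (H n (Suc j)) < \<delta> n"
     "H n 0 = x" "H n (NN n) = y" for n
    using F(1)[of n] unfolding FF by (auto simp: P_def)
  have NN0: "NN 0 = 1" using F(1)[of 0] unfolding FF by (auto simp: P_def)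
  have QF: "\<exists>M>0. NN (Suc n) = NN n * M \<and> (\<forall>l\<le>NN (Suc n). dist (H n (l div M)) (H (Suc n) l) < c*(1/2)^n)" for n
    using F(2)[of n] unfolding FF by (auto simp: Q_def)
  define g where "g n t = H n (nat \<lfloor>t * real (NN n)\<rfloor>)" for n t
  have gD: "g n t \<in> D" if t: "t \<in> {0..1}" for n t
    using PF(2) nat_floor_le t by (auto simp: g_def)
  have gstep: "dist (g n t) (g (Suc n) t) \<le> c*(1/2)^n" if t: "t \<in> {0..1}" for n t
  proof -
    obtain M where M: "M > 0" "NN (Suc n) = NN n * M" "\<forall>l\<le>NN (Suc n). dist (H n (l div M)) (H (Suc n) l) < c*(1/2)^n"
      using QF[of n] by blast
    define l where "l = nat \<lfloor>t * real (NN (Suc n))\<rfloor>"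
    have "l \<le> NN (Suc n)" using t nat_floor_le by (auto simp: l_def)
    moreover have "l div M = nat \<lfloor>t * real (NN n)\<rfloor>" unfolding l_def M(2) using t M(1) floor_div_aux by auto
    ultimately have "dist (H n (nat \<lfloor>t * real (NN n)\<rfloor>)) (H (Suc n) l) < c*(1/2)^n" using M(3) by metis
    then show ?thesis by (simp add: g_def l_def)
  qed
  define \<gamma> where "\<gamma> t = lim (\<lambda>n. g n t)" for t
  have gl: "\<gamma> t \<in> D \<and> (\<forall>n. dist (g n t) (\<gamma> t) \<le> 2*c*(1/2)^n)" if t: "t \<in> {0..1}" for t
    using geom_lim[OF D, of "\<lambda>n. g n t" c] gD[OF t] gstep[OF t] c by (simp add: \<gamma>_def)
  have "\<gamma> 0 = x"
  proof -
    have "g n 0 = x" for n by (simp add: g_def PF(4))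
    then show ?thesis by (simp add: \<gamma>_def)
  qed
  moreover have "\<gamma> 1 = y"
  proof -
    have "g n 1 = y" for n by (simp add: g_def PF(5))
    then show ?thesis by (simp add: \<gamma>_def)
  qed
  moreover have "continuous_on {0..1} \<gamma>"
    unfolding continuous_on_iff
  proof (intro ballI allI impI)
    fix t::real and \<eta>::real assume t: "t \<in> {0..1}" and \<eta>: "0 < \<eta>"
    have pos: "0 < \<eta> / (5*c)" using \<eta> c by simp
    have "\<exists>n. (1/2::real)^n < \<eta> / (5*c)" by (rule real_arch_pow_inv[OF pos]) simp
    then obtain n where n: "(1/2::real)^n < \<eta> / (5*c)" by blast
    have "(1/2::real)^n * (5*c) < \<eta>" using n c by (simp add: less_divide_eq)
    then have n': "5*c*(1/2::real)^n < \<eta>" by (simp add: mult.commute)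
    have Npos: "0 < real (NN n)" using PF(1) by simp
    show "\<exists>d>0. \<forall>s\<in>{0..1}. dist s t < d \<longrightarrow> dist (\<gamma> s) (\<gamma> t) < \<eta>"
    proof (intro exI conjI ballI impI)
      show "0 < 1 / real (NN n)" using Npos by simp
      fix s assume s: "s \<in> {0..1}" and st: "dist s t < 1 / real (NN n)"
      have "\<bar>s - t\<bar> * real (NN n) < 1" using st Npos by (simp add: dist_real_def less_divide_eq)
      then have "\<bar>s * real (NN n) - t * real (NN n)\<bar> < 1" by (simp add: left_diff_distrib[symmetric] abs_mult)
      then have cl: "nat \<lfloor>s * real (NN n)\<rfloor> = nat \<lfloor>t * real (NN n)\<rfloor> \<or> nat \<lfloor>s * real (NN n)\<rfloor> = Suc (nat \<lfloor>t * real (NN n)\<rfloor>) \<or> nat \<lfloor>t * real (NN n)\<rfloor> = Suc (nat \<lfloor>s * real (NN n)\<rfloor>)"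
        using s t by (intro floor_close) auto
      have il: "nat \<lfloor>s * real (NN n)\<rfloor> \<le> NN n" "nat \<lfloor>t * real (NN n)\<rfloor> \<le> NN n" using s t nat_floor_le by auto
      have gst: "dist (g n s) (g n t) \<le> c*(1/2)^n"
      proof -
        have "dist (g n s) (g n t) \<le> \<delta> n"
          using cl
        proof (elim disjE)
          assume "nat \<lfloor>s * real (NN n)\<rfloor> = nat \<lfloor>t * real (NN n)\<rfloor>"
          then show ?thesis using \<delta>pos[of n] by (simp add: g_def)
        next
          assume a: "nat \<lfloor>s * real (NN n)\<rfloor> = Suc (nat \<lfloor>t * real (NN n)\<rfloor>)"
          then have "nat \<lfloor>t * real (NN n)\<rfloor> < NN n" using il by simp
          from PF(3)[OF this] a show ?thesis by (simp add: g_def dist_commute)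
        next
          assume a: "nat \<lfloor>t * real (NN n)\<rfloor> = Suc (nat \<lfloor>s * real (NN n)\<rfloor>)"
          then have "nat \<lfloor>s * real (NN n)\<rfloor> < NN n" using il by simp
          from PF(3)[OF this] a show ?thesis by (simp add: g_def)
        qed
        then show ?thesis using \<delta>le[of n] by linarith
      qed
      have t1: "dist (\<gamma> s) (\<gamma> t) \<le> dist (\<gamma> s) (g n s) + dist (g n s) (\<gamma> t)" by (rule dist_triangle)
      have t2: "dist (g n s) (\<gamma> t) \<le> dist (g n s) (g n t) + dist (g n t) (\<gamma> t)" by (rule dist_triangle)
      have t3: "dist (\<gamma> s) (g n s) \<le> 2*c*(1/2)^n" using gl[OF s] by (simp add: dist_commute)
      have t4: "dist (g n t) (\<gamma> t) \<le> 2*c*(1/2)^n" using gl[OF t] by blast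
      show "dist (\<gamma> s) (\<gamma> t) < \<eta>" using t1 t2 t3 t4 gst n' by linarith
    qed
  qed
  moreover have "\<gamma> t \<in> D \<inter> cball x (3*c)" if t: "t \<in> {0..1}" for t
  proof -
    have i: "nat \<lfloor>t * real (NN 0)\<rfloor> \<le> 1" using nat_floor_le[of t "NN 0"] t NN0 by auto
    have "dist x (g 0 t) \<le> c"
    proof (cases "nat \<lfloor>t * real (NN 0)\<rfloor> = 0")
      case True then show ?thesis using PF(4)[of 0] c by (simp add: g_def)
    next
      case False then have "nat \<lfloor>t * real (NN 0)\<rfloor> = 1" using i by linarith
      then have "g 0 t = y" using PF(5)[of 0] NN0 by (simp add: g_def)
      then show ?thesis using xy(3) \<delta>le[of 0] by simp
    qed
    moreover have "dist (g 0 t) (\<gamma> t) \<le> 2*c" using gl[OF t] by (metis power_0 mult_1_right)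
    ultimately have "dist x (\<gamma> t) \<le> 3*c" using dist_triangle[of x "\<gamma> t" "g 0 t"] by linarith
    then show ?thesis using gl[OF t] by simp
  qed
  ultimately show ?thesis
    by (intro exI[of _ \<gamma>]) (auto simp: path_def pathstart_def pathfinish_def path_image_def)
qed



lemma lpc:
  fixes D :: "'a::metric_space set"
  assumes D: "compact D" "locally connected D"
  shows "locally path_connected D"
  unfolding locally_path_connected_im_kleinen
proof (intro allI impI)
  fix v x assume vx: "openin (top_of_set D) v \<and> x \<in> v"
  then obtain \<epsilon> where \<epsilon>: "0 < \<epsilon>" "ball x \<epsilon> \<inter> D \<subseteq> v" "v \<subseteq> D"
    unfolding openin_contains_ball by blast
  define c where "c = \<epsilon>/4"
  have c: "0 < c" using \<epsilon> by (simp add: c_def)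
  have "\<exists>d>0. \<forall>y\<in>D. \<forall>z\<in>D. dist y z < d \<longrightarrow> (\<exists>C. connected C \<and> C \<subseteq> D \<and> y \<in> C \<and> z \<in> C \<and> (\<forall>w\<in>C. dist y w < c*(1/2)^n))" for n
    using ulc[OF D, of "c*(1/2)^n"] c by simp
  then obtain d0 where d0: "\<And>n. 0 < d0 n \<and> (\<forall>y\<in>D. \<forall>z\<in>D. dist y z < d0 n \<longrightarrow> (\<exists>C. connected C \<and> C \<subseteq> D \<and> y \<in> C \<and> z \<in> C \<and> (\<forall>w\<in>C. dist y w < c*(1/2)^n)))"
    by metis
  define \<delta> where "\<delta> n = min (d0 n) (c*(1/2)^n)" for n
  have \<delta>pos: "0 < \<delta> n" for n using d0 c by (simp add: \<delta>_def)
  have \<delta>le: "\<delta> n \<le> c*(1/2)^n" for n by (simp add: \<delta>_def)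
  have ulcd: "\<forall>y\<in>D. \<forall>z\<in>D. dist y z < \<delta> n \<longrightarrow> (\<exists>C. connected C \<and> C \<subseteq> D \<and> y \<in> C \<and> z \<in> C \<and> (\<forall>w\<in>C. dist y w < c*(1/2)^n))" for n
    using d0[of n] by (auto simp: \<delta>_def)
  have xD: "x \<in> D" using vx \<epsilon> by blast
  show "\<exists>u. openin (top_of_set D) u \<and> x \<in> u \<and> u \<subseteq> v \<and>
          (\<forall>y. y \<in> u \<longrightarrow> (\<exists>p. path p \<and> path_image p \<subseteq> v \<and> pathstart p = x \<and> pathfinish p = y))"
  proof (rule exI[of _ "D \<inter> ball x (\<delta> 0)"], intro conjI allI impI)
    show "openin (top_of_set D) (D \<inter> ball x (\<delta> 0))" by (simp add: openin_open_Int)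
    show "x \<in> D \<inter> ball x (\<delta> 0)" using xD \<delta>pos by simp
    have "\<delta> 0 \<le> \<epsilon>" using \<delta>le[of 0] \<epsilon> by (simp add: c_def)
    then show "D \<inter> ball x (\<delta> 0) \<subseteq> v" using \<epsilon> by auto
    fix y assume y: "y \<in> D \<inter> ball x (\<delta> 0)"
    obtain p where p: "path p" "path_image p \<subseteq> D \<inter> cball x (3*c)" "pathstart p = x" "pathfinish p = y"
      using construct_path[OF D(1) c ulcd \<delta>pos \<delta>le xD, of y] y by auto
    have "D \<inter> cball x (3*c) \<subseteq> v" using \<epsilon> c by (auto simp: c_def)
    then show "\<exists>p. path p \<and> path_image p \<subseteq> v \<and> pathstart p = x \<and> pathfinish p = y"
      using p by blast
  qed
qed

lemma pc_open:
  fixes D :: "'a::metric_space set"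
  assumes D: "compact D" "locally connected D" and W: "openin (top_of_set D) W" "connected W"
  shows "path_connected W"
proof -
  have lW: "locally path_connected W" by (rule locally_open_subset[OF lpc[OF D] W(1)])
  show ?thesis unfolding path_connected_component
  proof (intro ballI)
    fix x y assume "x \<in> W" "y \<in> W"
    then have "connected_component W x y" using W(2) connected_component_def by blast
    then show "path_component W x y" using path_component_eq_connected_component[OF lW] by simp
  qed
qed

definition kemb :: "'a::metric_space \<Rightarrow> 'a \<Rightarrow> ('a \<Rightarrow>\<^sub>C real)" where
  "kemb x0 x = Bcontfun (\<lambda>y. dist x y - dist x0 y)"

lemma kemb_apply: "apply_bcontfun (kemb x0 x) = (\<lambda>y. dist x y - dist x0 y)"
proof -
  have "(\<lambda>y. dist x y - dist x0 y) \<in> bcontfun"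
  proof (rule bcontfun_normI)
    show "continuous_on UNIV (\<lambda>y. dist x y - dist x0 y)" by (intro continuous_intros)
    show "norm (dist x y - dist x0 y) \<le> dist x x0" for y
      using dist_triangle[of x y x0] dist_triangle[of x0 y x] by (simp add: dist_commute abs_le_iff)
  qed
  then show ?thesis by (simp add: kemb_def Bcontfun_inverse)
qed

lemma kemb_dist: "dist (kemb x0 x) (kemb x0 x') = dist x x'"
proof (rule antisym)
  show "dist (kemb x0 x) (kemb x0 x') \<le> dist x x'"
  proof (rule dist_bound)
    fix y
    show "dist (apply_bcontfun (kemb x0 x) y) (apply_bcontfun (kemb x0 x') y) \<le> dist x x'"
      using dist_triangle[of x y x'] dist_triangle[of x' y x]
      by (simp add: kemb_apply dist_real_def dist_commute abs_le_iff)
  qed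
  have "dist (apply_bcontfun (kemb x0 x) x') (apply_bcontfun (kemb x0 x') x') \<le> dist (kemb x0 x) (kemb x0 x')"
    by (rule dist_bounded)
  then show "dist x x' \<le> dist (kemb x0 x) (kemb x0 x')" by (simp add: kemb_apply dist_real_def)
qed

lemma path_contains_arc_metric:
  fixes p :: "real \<Rightarrow> 'a::metric_space"
  assumes "path p" "pathstart p = a" "pathfinish p = b" "a \<noteq> b"
  shows "\<exists>q. arc q \<and> path_image q \<subseteq> path_image p \<and> pathstart q = a \<and> pathfinish q = b"
proof -
  define e where "e = kemb a"
  have iso: "dist (e x) (e y) = dist x y" for x y by (simp add: e_def kemb_dist)
  have conte: "continuous_on S e" for S
    unfolding continuous_on_iff using iso by (metis)
  have inje: "inj e" by (rule injI) (metis iso dist_eq_0_iff)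
  have pe: "path (e \<circ> p)"
    using assms(1) unfolding path_def by (intro continuous_on_compose conte)
  have "e a \<noteq> e b" using inje assms(4) by (meson injD)
  then obtain q' where q': "arc q'" "path_image q' \<subseteq> path_image (e \<circ> p)" "pathstart q' = e a" "pathfinish q' = e b"
    using path_contains_arc[OF pe] assms(2,3) by (metis pathfinish_compose pathstart_compose)
  define ie where "ie = inv_into UNIV e"
  have iee: "ie (e x) = x" for x by (simp add: ie_def inv_into_f_f[OF inje])
  have cie: "continuous_on (range e) ie"
    unfolding continuous_on_iff
  proof (intro ballI allI impI)
    fix z \<epsilon> assume "z \<in> range e" "(0::real) < \<epsilon>"
    then obtain w where w: "z = e w" by blast
    show "\<exists>d>0. \<forall>z'\<in>range e. dist z' z < d \<longrightarrow> dist (ie z') (ie z) < \<epsilon>"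
    proof (intro exI conjI ballI impI)
      show "0 < \<epsilon>" by fact
      fix z' assume "z' \<in> range e" "dist z' z < \<epsilon>"
      then obtain w' where "z' = e w'" by blast
      then show "dist (ie z') (ie z) < \<epsilon>" using w iee iso \<open>dist z' z < \<epsilon>\<close> by simp
    qed
  qed
  have imq': "path_image q' \<subseteq> e ` path_image p" using q'(2) by (simp add: path_image_compose)
  define q where "q = ie \<circ> q'"
  have "path q"
    unfolding q_def path_def
  proof (rule continuous_on_compose)
    show "continuous_on {0..1} q'" using q'(1) by (simp add: arc_def path_def)
    show "continuous_on (q' ` {0..1}) ie"
      using imq' by (intro continuous_on_subset[OF cie]) (auto simp: path_image_def)
  qed
  moreover have "inj_on q {0..1}"
  proof (rule inj_onI)
    fix s s' assume ss: "s \<in> {0..1}" "s' \<in> {0..1}" "q s = q s'"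
    obtain w w' where "q' s = e w" "q' s' = e w'" using imq' ss by (force simp: path_image_def)
    then have "q' s = q' s'" using ss(3) iee by (simp add: q_def)
    then show "s = s'" using q'(1) ss by (meson arc_def inj_onD)
  qed
  moreover have "path_image q \<subseteq> path_image p"
  proof
    fix z assume "z \<in> path_image q"
    then obtain s where s: "s \<in> {0..1}" "z = ie (q' s)" by (auto simp: path_image_def q_def)
    then obtain w where "w \<in> path_image p" "q' s = e w" using imq' by (force simp: path_image_def)
    then show "z \<in> path_image p" using s iee by simp
  qed
  moreover have "pathstart q = a" "pathfinish q = b"
    using q'(3,4) iee by (simp_all add: q_def pathstart_def pathfinish_def)
  ultimately show ?thesis by (intro exI[of _ q]) (simp add: arc_def)
qed

lemma arc_in_open:
  fixes D :: "'a::metric_space set"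
  assumes D: "compact D" "locally connected D" and W: "openin (top_of_set D) W" "connected W"
    and ab: "a \<in> W" "b \<in> W" "a \<noteq> b"
  shows "\<exists>g. arc g \<and> path_image g \<subseteq> W \<and> pathstart g = a \<and> pathfinish g = b"
proof -
  obtain p where p: "path p" "path_image p \<subseteq> W" "pathstart p = a" "pathfinish p = b"
    using pc_open[OF D W] ab unfolding path_connected_def by blast
  then show ?thesis using path_contains_arc_metric[OF p(1,3,4) ab(3)] by blast
qed




definition msub :: "real \<Rightarrow> real \<Rightarrow> (real \<Rightarrow> 'a) \<Rightarrow> real \<Rightarrow> 'a" where
  "msub u v g = (\<lambda>x. g ((v - u) * x + u))"

lemma aff_mem:
  fixes u v x :: real
  assumes x: "x \<in> {0..1}"
  shows "(v - u) * x + u \<in> {min u v..max u v}"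
proof (cases "u \<le> v")
  case True
  have "0 \<le> (v - u) * x" using True x by simp
  moreover have "(v - u) * x \<le> (v - u) * 1" using True x by (intro mult_left_mono) auto
  ultimately show ?thesis using True by simp
next
  case False
  have "0 \<le> (u - v) * x" using False x by simp
  moreover have "(u - v) * x \<le> (u - v) * 1" using False x by (intro mult_left_mono) auto
  ultimately show ?thesis using False by (simp add: algebra_simps)
qed

lemma subpath_image_sub:
  fixes g :: "real \<Rightarrow> 'a::topological_space"
  shows "path_image (msub u v g) \<subseteq> g ` {min u v..max u v}"
  using aff_mem by (force simp: path_image_def msub_def)

lemma msub_start [simp]: "pathstart (msub u v g) = g u"
  and msub_finish [simp]: "pathfinish (msub u v g) = g v"
  by (simp_all add: msub_def pathstart_def pathfinish_def)

lemma arc_msub: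
  fixes g :: "real \<Rightarrow> 'a::topological_space"
  assumes g: "arc g" and uv: "u \<in> {0..1}" "v \<in> {0..1}" "u \<noteq> v"
  shows "arc (msub u v g)"
proof -
  have sub: "(\<lambda>x. (v - u) * x + u) ` {0..1} \<subseteq> {0..1}"
  proof
    fix y assume "y \<in> (\<lambda>x. (v - u) * x + u) ` {0..1}"
    then obtain x where "x \<in> {0..1}" "y = (v - u) * x + u" by blast
    then show "y \<in> {0..1}" using aff_mem[of x v u] uv by auto
  qed
  have "continuous_on {0..1} (g \<circ> (\<lambda>x. (v - u) * x + u))"
  proof (rule continuous_on_compose)
    show "continuous_on {0..1} (\<lambda>x. (v - u) * x + u)" by (intro continuous_intros)
    show "continuous_on ((\<lambda>x. (v - u) * x + u) ` {0..1}) g"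
      using g sub by (auto simp: arc_def path_def intro: continuous_on_subset)
  qed
  then have "path (msub u v g)" by (simp add: path_def msub_def o_def)
  moreover have "inj_on (msub u v g) {0..1}"
  proof (rule inj_onI)
    fix x y assume xy: "x \<in> {0..1}" "y \<in> {0..1}" "msub u v g x = msub u v g y"
    have "(v - u) * x + u \<in> {0..1}" "(v - u) * y + u \<in> {0..1}" using sub xy(1,2) by (auto simp: image_subset_iff)
    then have "(v - u) * x + u = (v - u) * y + u" using g xy by (auto simp: msub_def arc_def dest: inj_onD)
    then show "x = y" using uv by simp
  qed
  ultimately show ?thesis by (simp add: arc_def)
qed

lemma scc:
  fixes g h :: "real \<Rightarrow> 'a::metric_space"
  assumes g: "arc g" and h: "arc h" and se: "pathstart h = pathstart g" "pathfinish h = pathfinish g"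
    and t0: "t0 \<in> {0..1}" "g t0 \<notin> path_image h"
  shows "\<exists>c. simple_path c \<and> pathfinish c = pathstart c \<and> path_image c \<subseteq> path_image g \<union> path_image h"
proof -
  define K where "K = path_image h"
  have Kc: "closed K" unfolding K_def using h by (simp add: arc_imp_path closed_path_image)
  have gc: "continuous_on {0..1} g" using g by (simp add: arc_def path_def)
  define S where "S = {0..1} \<inter> g -` K"
  have Sc: "closed S" unfolding S_def by (rule continuous_closed_preimage[OF gc closed_atLeastAtMost Kc])
  have h0: "h 0 \<in> K" "h 1 \<in> K" unfolding K_def path_image_def by (rule imageI, simp)+
  have 0: "0 \<in> S" using se h0 by (simp add: S_def pathstart_def)
  have 1: "1 \<in> S" using se h0 by (simp add: S_def pathfinish_def)
  define S1 where "S1 = S \<inter> {0..t0}"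
  define S2 where "S2 = S \<inter> {t0..1}"
  have S1: "S1 \<noteq> {}" "bdd_above S1" "closed S1" using 0 t0 Sc by (auto simp: S1_def bdd_above_def intro!: closed_Int)
  have S2: "S2 \<noteq> {}" "bdd_below S2" "closed S2" using 1 t0 Sc by (auto simp: S2_def bdd_below_def intro!: closed_Int)
  define a where "a = Sup S1"
  define b where "b = Inf S2"
  have aS: "a \<in> S1" unfolding a_def using closed_contains_Sup S1 by blast
  have bS: "b \<in> S2" unfolding b_def using closed_contains_Inf S2 by blast
  have a01: "a \<in> {0..1}" "g a \<in> K" using aS by (auto simp: S1_def S_def)
  have b01: "b \<in> {0..1}" "g b \<in> K" using bS by (auto simp: S2_def S_def)
  have "a \<le> t0" using aS by (simp add: S1_def)
  moreover have "a \<noteq> t0" using a01 t0 K_def by auto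
  ultimately have at: "a < t0" by simp
  have "t0 \<le> b" using bS by (simp add: S2_def)
  moreover have "b \<noteq> t0" using b01 t0 K_def by auto
  ultimately have bt: "t0 < b" by simp
  have gap: "g s \<notin> K" if s: "a < s" "s < b" for s
  proof
    assume gs: "g s \<in> K"
    have s01: "s \<in> {0..1}" using s a01 b01 by auto
    show False
    proof (cases "s \<le> t0")
      case True
      then have "s \<in> S1" using gs s01 by (auto simp: S1_def S_def)
      then have "s \<le> a" unfolding a_def using S1(2) by (rule cSup_upper)
      then show False using s by simp
    next
      case False
      then have "s \<in> S2" using gs s01 by (auto simp: S2_def S_def)
      then have "b \<le> s" unfolding b_def using S2(2) by (rule cInf_lower)
      then show False using s by simp
    qed
  qed
  obtain a' where a': "a' \<in> {0..1}" "h a' = g a" using a01 by (auto simp: K_def path_image_def)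
  obtain b' where b': "b' \<in> {0..1}" "h b' = g b" using b01 by (auto simp: K_def path_image_def)
  have gab: "g a \<noteq> g b" using g a01 b01 at bt by (metis arc_imp_inj_on inj_onD less_irrefl less_trans)
  then have "a' \<noteq> b'" using a' b' by auto
  define c1 where "c1 = msub a b g"
  define c2 where "c2 = msub b' a' h"
  have c1: "arc c1" unfolding c1_def using g a01 b01 at bt by (intro arc_msub) auto
  have c2: "arc c2" unfolding c2_def using h a' b' \<open>a' \<noteq> b'\<close> by (intro arc_msub) auto
  have e1: "pathfinish c1 = pathstart c2" using b' by (simp add: c1_def c2_def)
  have e2: "pathfinish c2 = pathstart c1" using a' by (simp add: c1_def c2_def)
  have im1: "path_image c1 \<subseteq> g ` {a..b}" unfolding c1_def using subpath_image_sub[of a b g] at bt by simp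
  have im2: "path_image c2 \<subseteq> K"
  proof -
    have "path_image c2 \<subseteq> h ` {min b' a'..max b' a'}" unfolding c2_def by (rule subpath_image_sub)
    also have "\<dots> \<subseteq> K" unfolding K_def path_image_def
      by (rule image_mono) (use a' b' in auto)
    finally show ?thesis .
  qed
  have int: "path_image c1 \<inter> path_image c2 \<subseteq> {pathstart c1, pathstart c2}"
  proof
    fix z assume z: "z \<in> path_image c1 \<inter> path_image c2"
    then obtain s where s: "s \<in> {a..b}" "z = g s" using im1 by blast
    have "g s \<in> K" using z s im2 by blast
    then have "s = a \<or> s = b" using gap s by force
    then show "z \<in> {pathstart c1, pathstart c2}" using s b' by (auto simp: c1_def c2_def)
  qed
  have "simple_path (c1 +++ c2)" by (rule simple_path_join_loop[OF c1 c2 e1 e2 int])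
  moreover have "pathfinish (c1 +++ c2) = pathstart (c1 +++ c2)" using e2 by simp
  moreover have "path_image (c1 +++ c2) \<subseteq> path_image g \<union> path_image h"
  proof -
    have "path_image c1 \<subseteq> path_image g" using im1 a01 b01 by (auto simp: path_image_def)
    then show ?thesis using im2 e1 by (auto simp: path_image_join K_def)
  qed
  ultimately show ?thesis by blast
qed



lemma openin_comp:
  fixes D :: "'a::metric_space set"
  assumes "locally connected D" "x \<in> D"
  shows "openin (top_of_set D) (connected_component_set (D - {x}) z)"
proof -
  have o: "openin (top_of_set D) (D - {x})" by (rule openin_delete) simp
  have "locally connected (D - {x})" by (rule locally_open_subset[OF assms(1) o])
  then have "openin (top_of_set (D - {x})) (connected_component_set (D - {x}) z)"
    by (rule openin_connected_component_locally_connected)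
  then show ?thesis by (rule openin_trans[OF _ o])
qed

lemma comp_closure:
  fixes D :: "'a::metric_space set"
  assumes D: "connected D" "locally connected D" and a: "a \<in> D" and z: "z \<in> D - {a}"
  shows "connected (insert a (connected_component_set (D - {a}) z))"
proof -
  define E where "E = connected_component_set (D - {a}) z"
  have Eo: "openin (top_of_set D) E" unfolding E_def by (rule openin_comp[OF D(2) a])
  have ED: "E \<subseteq> D - {a}" unfolding E_def by (rule connected_component_subset)
  have "closedin (top_of_set (D - {a})) E" unfolding E_def by (rule closedin_connected_component)
  then obtain F where F: "closed F" "E = (D - {a}) \<inter> F" by (auto simp: closedin_closed)
  have zE: "z \<in> E" using z by (simp add: E_def)
  have aE: "a \<notin> E" using ED by blast
  have "a \<in> closure E"
  proof (rule ccontr)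
    assume na: "a \<notin> closure E"
    have cF: "closure E \<subseteq> F" by (rule closure_minimal) (use F in auto)
    have "D \<inter> closure E \<subseteq> E"
    proof
      fix w assume w: "w \<in> D \<inter> closure E"
      then have "w \<noteq> a" using na by auto
      then have "w \<in> D - {a}" "w \<in> F" using w cF by auto
      then show "w \<in> E" using F(2) by blast
    qed
    moreover have "E \<subseteq> D \<inter> closure E" using ED closure_subset[of E] by auto
    ultimately have EE: "E = D \<inter> closure E" by (rule antisym[rotated])
    have "closedin (top_of_set D) (D \<inter> closure E)" by (rule closedin_closed_Int) simp
    then have clo: "closedin (top_of_set D) E" using EE by simp
    have "E = {} \<or> E = D" using D(1) Eo clo unfolding connected_clopen by blast
    then show False using zE aE a by auto
  qed
  moreover have "connected E" by (simp add: E_def)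
  moreover have "insert a E \<subseteq> closure E" using \<open>a \<in> closure E\<close> closure_subset[of E] by blast
  ultimately have "connected (insert a E)"
    by (intro connected_intermediate_closure[of E "insert a E"]) auto
  then show ?thesis by (simp add: E_def)
qed

lemma sep:
  fixes D :: "'a::metric_space set"
  assumes dD: "dendrite D" and g: "arc g" "path_image g \<subseteq> D" and t: "t \<in> {0<..<1}"
  shows "connected_component_set (D - {g t}) (g 0) \<noteq> connected_component_set (D - {g t}) (g 1)"
proof
  assume eq: "connected_component_set (D - {g t}) (g 0) = connected_component_set (D - {g t}) (g 1)"
  have D: "compact D" "locally connected D" using dD by (auto simp: dendrite_def)
  define U where "U = connected_component_set (D - {g t}) (g 0)"
  have inj: "inj_on g {0..1}" using g by (simp add: arc_def)
  have gt: "g t \<in> D" "g 0 \<in> D" "g 1 \<in> D" using g t by (auto simp: path_image_def)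
  have t01: "t \<in> {0..1}" using t by simp
  have g0: "g 0 \<noteq> g t"
  proof
    assume "g 0 = g t" then have "0 = t" using t01 by (intro inj_onD[OF inj]) auto
    then show False using t by simp
  qed
  have g1: "g 1 \<noteq> g t"
  proof
    assume "g 1 = g t" then have "1 = t" using t01 by (intro inj_onD[OF inj]) auto
    then show False using t by simp
  qed
  have g01: "g 0 \<noteq> g 1"
  proof
    assume "g 0 = g 1" then have "(0::real) = 1" by (intro inj_onD[OF inj]) auto
    then show False by simp
  qed
  have "g 0 \<in> U" using gt g0 by (simp add: U_def)
  moreover have "g 1 \<in> U" using gt g1 eq by (simp add: U_def)
  moreover have "openin (top_of_set D) U" unfolding U_def by (rule openin_comp[OF D(2) gt(1)])
  moreover have "connected U" by (simp add: U_def)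
  ultimately obtain h where h: "arc h" "path_image h \<subseteq> U" "pathstart h = g 0" "pathfinish h = g 1"
    using arc_in_open[OF D] g01 by blast
  have "U \<subseteq> D - {g t}" unfolding U_def by (rule connected_component_subset)
  then have "g t \<notin> path_image h" using h by blast
  then obtain c where c: "simple_path c" "pathfinish c = pathstart c" "path_image c \<subseteq> path_image g \<union> path_image h"
    using scc[OF g(1) h(1), of t] h t by (auto simp: pathstart_def pathfinish_def)
  have "path_image c \<subseteq> D" using c(3) g(2) h(2) \<open>U \<subseteq> D - {g t}\<close> by blast
  then show False using dD c unfolding dendrite_def by blast
qed



theorem lemma21:
  fixes D :: "'a::metric_space set" and f :: "'a \<Rightarrow> 'a" and p q :: 'a
  assumes "dendrite D" and "nondegenerate D"
    and "continuous_on D f" and "f ` D \<subseteq> D"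
    and "endpoint D p" and "endpoint D q" and "p \<noteq> q"
    and "f p = p" and "f q = q"
    and "\<not> weakly_repelling D f p (D - {p})"
    and "\<not> weakly_repelling D f q (D - {q})"
  shows "\<exists>r. cutpoint D r \<and> r \<in> open_darc D p q \<and> f r = r"
proof -
  note dD = assms(1)
  have D: "compact D" "locally connected D" "connected D" using dD by (auto simp: dendrite_def)
  have pqD: "p \<in> D" "q \<in> D" using assms(5,6) by (auto simp: endpoint_def)
  have fc: "continuous_on D f" and fD: "\<And>x. x \<in> D \<Longrightarrow> f x \<in> D" using assms(3,4) by auto
  obtain g where g: "arc g" "path_image g \<subseteq> D" "pathstart g = p" "pathfinish g = q"
    using arc_in_open[OF D(1,2) openin_subtopology_self D(3) pqD assms(7)] by blast
  have g01: "g 0 = p" "g 1 = q" using g by (auto simp: pathstart_def pathfinish_def)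
  have inj: "inj_on g {0..1}" using g by (simp add: arc_def)
  have gc: "continuous_on {0..1} g" using g by (simp add: arc_def path_def)
  have gD: "g s \<in> D" if "s \<in> {0..1}" for s using g that by (auto simp: path_image_def)
  have gneq: "g s \<noteq> g t" if "s \<in> {0..1}" "t \<in> {0..1}" "s \<noteq> t" for s t
    using inj_onD[OF inj] that by blast
  define P where "P x = connected_component_set (D - {x}) p" for x
  define Q where "Q x = connected_component_set (D - {x}) q" for x
  have sepPQ: "P (g t) \<noteq> Q (g t)" if "t \<in> {0<..<1}" for t
    using sep[OF dD g(1,2) that] g01 by (simp add: P_def Q_def)
  have gne: "g t \<noteq> p" "g t \<noteq> q" if "t \<in> {0<..<1}" for t
    using gneq[of t 0] gneq[of t 1] that g01 by auto
  have cut: "cutpoint D (g t)" if t: "t \<in> {0<..<1}" for t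
  proof -
    have "g t \<in> D" using gD t by simp
    moreover have "\<not> connected (D - {g t})"
    proof
      assume c: "connected (D - {g t})"
      have "p \<in> D - {g t}" "q \<in> D - {g t}" using pqD gne[OF t] by auto
      then have "P (g t) = Q (g t)" using c by (simp add: P_def Q_def connected_component_eq_self)
      then show False using sepPQ[OF t] by simp
    qed
    ultimately show ?thesis by (simp add: cutpoint_def)
  qed
  have seg0: "connected (g ` {0..t1}) \<and> g ` {0..t1} \<subseteq> D - {g t} \<and> p \<in> g ` {0..t1}"
    if s0: "0 \<le> t1" "t1 < t" "t \<le> 1" for t1 t
  proof (intro conjI)
    show "connected (g ` {0..t1})"
      using s0 by (intro connected_continuous_image continuous_on_subset[OF gc]) auto
    show "g ` {0..t1} \<subseteq> D - {g t}"
      using s0 gD gneq by force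
    show "p \<in> g ` {0..t1}" using s0 g01 by force
  qed
  have seg1: "connected (g ` {t1..1}) \<and> g ` {t1..1} \<subseteq> D - {g t} \<and> q \<in> g ` {t1..1}"
    if s1: "0 \<le> t" "t < t1" "t1 \<le> 1" for t1 t
  proof (intro conjI)
    show "connected (g ` {t1..1})"
      using s1 by (intro connected_continuous_image continuous_on_subset[OF gc]) auto
    show "g ` {t1..1} \<subseteq> D - {g t}"
      using s1 gD gneq by force
    show "q \<in> g ` {t1..1}" using s1 g01 by force
  qed
  have compdisj: "S x = S' x" if "y \<in> connected_component_set (D - {x}) a" "y \<in> connected_component_set (D - {x}) b"
    "S x = connected_component_set (D - {x}) a" "S' x = connected_component_set (D - {x}) b" for y x a b S S'
    using that connected_component_eq by metis
  have sepfix: "f x \<in> P x" if "x \<in> D - {p}" "cutpoint D x" "f x \<noteq> x" "\<not> separates D x p (f x)" for x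
  proof -
    have "p \<in> D - {x}" "f x \<in> D - {x}" using that pqD fD by auto
    then have "connected_component_set (D - {x}) p = connected_component_set (D - {x}) (f x)"
      using that(4) by (simp add: separates_def)
    then show ?thesis using \<open>f x \<in> D - {x}\<close> by (simp add: P_def)
  qed
  have sepfixq: "f x \<in> Q x" if "x \<in> D - {q}" "cutpoint D x" "f x \<noteq> x" "\<not> separates D x q (f x)" for x
  proof -
    have "q \<in> D - {x}" "f x \<in> D - {x}" using that pqD fD by auto
    then have "connected_component_set (D - {x}) q = connected_component_set (D - {x}) (f x)"
      using that(4) by (simp add: separates_def)
    then show ?thesis using \<open>f x \<in> D - {x}\<close> by (simp add: Q_def)
  qed
  have wrp: "(\<exists>e>0. \<forall>x\<in>D - {p}. cutpoint D x \<longrightarrow> e \<le> dist x p \<or> f x \<noteq> x) \<and>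
     (\<exists>e>0. \<forall>x\<in>D - {p}. cutpoint D x \<longrightarrow> e \<le> dist x p \<or> \<not> separates D x p (f x))"
    using assms(10) unfolding weakly_repelling_def by (auto simp: not_less)
  then obtain e1' where e1': "e1' > 0" "\<forall>x\<in>D - {p}. cutpoint D x \<longrightarrow> e1' \<le> dist x p \<or> f x \<noteq> x" by blast
  obtain e2' where e2': "e2' > 0" "\<forall>x\<in>D - {p}. cutpoint D x \<longrightarrow> e2' \<le> dist x p \<or> \<not> separates D x p (f x)" using wrp by blast
  obtain e1 where e1: "e1 > 0" "\<And>x. x \<in> D - {p} \<Longrightarrow> dist x p < e1 \<Longrightarrow> cutpoint D x \<Longrightarrow> f x \<noteq> x"
    using e1' by (meson not_le)
  obtain e2 where e2: "e2 > 0" "\<And>x. x \<in> D - {p} \<Longrightarrow> dist x p < e2 \<Longrightarrow> cutpoint D x \<Longrightarrow> \<not> separates D x p (f x)"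
    using e2' by (meson not_le)
  have wrq: "(\<exists>e>0. \<forall>x\<in>D - {q}. cutpoint D x \<longrightarrow> e \<le> dist x q \<or> f x \<noteq> x) \<and>
     (\<exists>e>0. \<forall>x\<in>D - {q}. cutpoint D x \<longrightarrow> e \<le> dist x q \<or> \<not> separates D x q (f x))"
    using assms(11) unfolding weakly_repelling_def by (auto simp: not_less)
  then obtain e3' where e3': "e3' > 0" "\<forall>x\<in>D - {q}. cutpoint D x \<longrightarrow> e3' \<le> dist x q \<or> f x \<noteq> x" by blast
  obtain e4' where e4': "e4' > 0" "\<forall>x\<in>D - {q}. cutpoint D x \<longrightarrow> e4' \<le> dist x q \<or> \<not> separates D x q (f x)" using wrq by blast
  obtain e3 where e3: "e3 > 0" "\<And>x. x \<in> D - {q} \<Longrightarrow> dist x q < e3 \<Longrightarrow> cutpoint D x \<Longrightarrow> f x \<noteq> x"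
    using e3' by (meson not_le)
  obtain e4 where e4: "e4 > 0" "\<And>x. x \<in> D - {q} \<Longrightarrow> dist x q < e4 \<Longrightarrow> cutpoint D x \<Longrightarrow> \<not> separates D x q (f x)"
    using e4' by (meson not_le)
  define A where "A = {t \<in> {0<..<1}. f (g t) \<noteq> g t \<and> f (g t) \<in> P (g t)}"
  have PQdisj: "\<not> (y \<in> P (g t) \<and> y \<in> Q (g t))" if "t \<in> {0<..<1}" for y t
  proof
    assume y: "y \<in> P (g t) \<and> y \<in> Q (g t)"
    then have "P (g t) = Q (g t)" unfolding P_def Q_def by (metis connected_component_eq)
    then show False using sepPQ[OF that] by simp
  qed
  obtain d1 where d1: "d1 > 0" "\<And>t. 0 < t \<Longrightarrow> t < d1 \<Longrightarrow> t \<in> A"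
  proof -
    have "0 \<in> {0..1::real}" by simp
    then obtain d where d: "d > 0" "\<And>s. s \<in> {0..1} \<Longrightarrow> dist s 0 < d \<Longrightarrow> dist (g s) (g 0) < min e1 e2"
      using gc e1(1) e2(1) unfolding continuous_on_iff by (metis min_less_iff_conj)
    show ?thesis
    proof (rule that[of "min d 1"])
      show "0 < min d 1" using d by simp
      fix t :: real assume t: "0 < t" "t < min d 1"
      then have t01: "t \<in> {0<..<1}" by simp
      have x: "g t \<in> D - {p}" using gD gne t01 by auto
      have "dist (g t) p < min e1 e2" using d(2)[of t] t g01 by (simp add: dist_real_def)
      then have "f (g t) \<noteq> g t" "\<not> separates D (g t) p (f (g t))"
        using e1(2)[OF x] e2(2)[OF x] cut[OF t01] by auto
      then show "t \<in> A" using sepfix[OF x cut[OF t01]] t01 by (simp add: A_def)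
    qed
  qed
  obtain d2 where d2: "d2 > 0" "\<And>t. 1 - d2 < t \<Longrightarrow> t < 1 \<Longrightarrow> t \<notin> A"
  proof -
    have "1 \<in> {0..1::real}" by simp
    then obtain d where d: "d > 0" "\<And>s. s \<in> {0..1} \<Longrightarrow> dist s 1 < d \<Longrightarrow> dist (g s) (g 1) < min e3 e4"
      using gc e3(1) e4(1) unfolding continuous_on_iff by (metis min_less_iff_conj)
    show ?thesis
    proof (rule that[of "min d 1"])
      show "0 < min d 1" using d by simp
      fix t :: real assume t: "1 - min d 1 < t" "t < 1"
      then have t01: "t \<in> {0<..<1}" by simp
      have x: "g t \<in> D - {q}" using gD gne t01 by auto
      have "dist t 1 < d" using t by (simp add: dist_real_def)
      then have "dist (g t) q < min e3 e4" using d(2)[of t] t01 g01 by simp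
      then have "f (g t) \<noteq> g t" "\<not> separates D (g t) q (f (g t))"
        using e3(2)[OF x] e4(2)[OF x] cut[OF t01] by auto
      then have "f (g t) \<in> Q (g t)" using sepfixq[OF x cut[OF t01]] by simp
      then show "t \<notin> A" using PQdisj[OF t01] by (auto simp: A_def)
    qed
  qed
  have A3: "\<exists>\<epsilon>>0. \<forall>t. t1 \<le> t \<longrightarrow> t < t1 + \<epsilon> \<longrightarrow> t \<in> A" if t1A: "t1 \<in> A" for t1
  proof -
    have t1: "t1 \<in> {0<..<1}" "f (g t1) \<noteq> g t1" "f (g t1) \<in> P (g t1)" using t1A by (auto simp: A_def)
    define x1 where "x1 = g t1"
    have x1D: "x1 \<in> D" using gD t1 by (simp add: x1_def)
    define E where "E = P x1"
    have Eo: "openin (top_of_set D) E" unfolding E_def P_def by (rule openin_comp[OF D(2) x1D])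
    have fgE: "f (g t1) \<in> E" using t1 by (simp add: E_def x1_def)
    obtain r where r: "r > 0" "ball (f (g t1)) r \<inter> D \<subseteq> E"
      using Eo fgE unfolding openin_contains_ball by blast
    have fgc: "continuous_on {0..1} (f \<circ> g)"
      using gc fc g(2) by (intro continuous_on_compose continuous_on_subset[OF fc]) (auto simp: path_image_def)
    have "t1 \<in> {0..1}" using t1 by simp
    then obtain \<epsilon> where \<epsilon>: "\<epsilon> > 0" "\<And>s. s \<in> {0..1} \<Longrightarrow> dist s t1 < \<epsilon> \<Longrightarrow> dist (f (g s)) (f (g t1)) < r"
      using fgc r(1) unfolding continuous_on_iff by (metis comp_apply)
    have inE: "f (g s) \<in> E" if "s \<in> {0..1}" "dist s t1 < \<epsilon>" for s
      using \<epsilon>(2)[OF that] r(2) fD[OF gD[OF that(1)]] by (auto simp: dist_commute)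
    show ?thesis
    proof (intro exI[of _ "min \<epsilon> (1 - t1)"] conjI allI impI)
      show "0 < min \<epsilon> (1 - t1)" using \<epsilon> t1 by simp
      fix t assume tt: "t1 \<le> t" "t < t1 + min \<epsilon> (1 - t1)"
      show "t \<in> A"
      proof (cases "t = t1")
        case True then show ?thesis using t1A by simp
      next
        case False
        then have tt1: "t1 < t" using tt by simp
        have t01: "t \<in> {0<..<1}" using tt t1 by auto
        define x where "x = g t"
        have fxE: "f x \<in> E" using inE[of t] tt t01 by (simp add: x_def dist_real_def)
        have "g ` {t..1} \<subseteq> Q x1"
          unfolding Q_def x1_def using seg1[of t1 t] t1 tt1 t01
          by (intro connected_component_maximal) auto
        then have "x \<in> Q x1" using t01 by (auto simp: x_def)
        then have xE: "x \<notin> E" using PQdisj[of t1 x] t1 by (auto simp: E_def x1_def)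
        have ED: "E \<subseteq> D - {x1}" unfolding E_def P_def by (rule connected_component_subset)
        have pE: "p \<in> E" using pqD gne[OF t1(1)] by (simp add: E_def P_def x1_def)
        define K where "K = E \<union> g ` {0..t1}"
        have s0: "connected (g ` {0..t1}) \<and> g ` {0..t1} \<subseteq> D - {g t} \<and> p \<in> g ` {0..t1}"
          using seg0[of t1 t] t1 tt1 t01 by auto
        have cE: "connected E" by (simp add: E_def P_def)
        have ne: "E \<inter> g ` {0..t1} \<noteq> {}" using pE s0 by blast
        have "connected K" unfolding K_def using connected_Un[OF cE conjunct1[OF s0] ne] .
        moreover have "K \<subseteq> D - {x}" using ED xE s0 by (auto simp: K_def x_def)
        moreover have "p \<in> K" using pE by (simp add: K_def)
        ultimately have "K \<subseteq> P x" unfolding P_def by (intro connected_component_maximal)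
        then have "f x \<in> P x" using fxE by (auto simp: K_def)
        moreover have "f x \<noteq> x" using fxE xE by auto
        ultimately show ?thesis using t01 by (simp add: A_def x_def)
      qed
    qed
  qed
  define T where "T = {t \<in> {0<..<1}. t \<notin> A}"
  define t2 where "t2 = max (1 - d2/2) (1/2)"
  have t2T: "t2 \<in> T" using d2 by (auto simp: T_def t2_def)
  have Tne: "T \<noteq> {}" using t2T by blast
  have Tb: "bdd_below T" unfolding bdd_below_def T_def by (rule exI[of _ 0]) auto
  define a where "a = Inf T"
  have Tge: "min d1 1 \<le> t" if "t \<in> T" for t
  proof (rule ccontr)
    assume "\<not> min d1 1 \<le> t"
    then have "t < d1" by simp
    then show False using d1(2)[of t] that by (auto simp: T_def)
  qed
  have a0: "0 < a"
  proof -
    have "min d1 1 \<le> a" unfolding a_def using Tne Tge by (intro cInf_greatest) auto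
    then show ?thesis using d1(1) by simp
  qed
  have a1: "a < 1"
  proof -
    have "a \<le> t2" unfolding a_def using t2T Tb by (rule cInf_lower)
    then show ?thesis using t2T by (auto simp: T_def)
  qed
  have a01: "a \<in> {0<..<1}" using a0 a1 by simp
  have belowA: "t \<in> A" if "0 < t" "t < a" for t
  proof (rule ccontr)
    assume "t \<notin> A"
    then have "t \<in> T" using that a1 by (auto simp: T_def)
    then have "a \<le> t" unfolding a_def using Tb by (rule cInf_lower)
    then show False using that by simp
  qed
  have aA: "a \<notin> A"
  proof
    assume "a \<in> A"
    then obtain \<epsilon> where \<epsilon>: "\<epsilon> > 0" "\<And>t. a \<le> t \<Longrightarrow> t < a + \<epsilon> \<Longrightarrow> t \<in> A" using A3 by blast
    have "a + \<epsilon> \<le> t" if "t \<in> T" for t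
    proof -
      have "a \<le> t" unfolding a_def using that Tb by (rule cInf_lower)
      moreover have "t \<notin> A" using that by (simp add: T_def)
      ultimately show ?thesis using \<epsilon>(2)[of t] by force
    qed
    then have "a + \<epsilon> \<le> a" unfolding a_def using Tne by (intro cInf_greatest) (auto simp: a_def)
    then show False using \<epsilon> by simp
  qed
  define x where "x = g a"
  have xD: "x \<in> D" using gD a01 by (simp add: x_def)
  show ?thesis
  proof (cases "f x = x")
    case True
    have "x \<in> darc D p q"
      using assms(7) g a01 by (auto simp: darc_def x_def path_image_def)
    then have "x \<in> open_darc D p q" using gne[OF a01] by (simp add: open_darc_def x_def)
    then show ?thesis using True cut[OF a01] by (auto simp: x_def)
  next
    case False
    have fxP: "f x \<notin> P x" using aA False a01 by (simp add: A_def x_def)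
    have fxD: "f x \<in> D - {x}" using fD[OF xD] False by simp
    define E where "E = connected_component_set (D - {x}) (f x)"
    have fxE: "f x \<in> E" using fxD by (simp add: E_def)
    have pE: "p \<notin> E"
    proof
      assume "p \<in> E"
      then have "E = P x" unfolding E_def P_def by (metis connected_component_eq)
      then show False using fxE fxP by simp
    qed
    have Eo: "openin (top_of_set D) E" unfolding E_def by (rule openin_comp[OF D(2) xD])
    obtain r where r: "r > 0" "ball (f (g a)) r \<inter> D \<subseteq> E"
      using Eo fxE unfolding openin_contains_ball x_def by blast
    have fgc: "continuous_on {0..1} (f \<circ> g)"
      using gc fc g(2) by (intro continuous_on_compose continuous_on_subset[OF fc]) (auto simp: path_image_def)
    have "a \<in> {0..1}" using a01 by simp
    then obtain \<epsilon> where \<epsilon>: "\<epsilon> > 0" "\<And>s. s \<in> {0..1} \<Longrightarrow> dist s a < \<epsilon> \<Longrightarrow> dist (f (g s)) (f (g a)) < r"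
      using fgc r(1) unfolding continuous_on_iff by (metis comp_apply)
    define s where "s = max (a/2) (a - \<epsilon>/2)"
    have s: "0 < s" "s < a" "dist s a < \<epsilon>" using a0 \<epsilon>(1) by (auto simp: s_def dist_real_def)
    have s01: "s \<in> {0<..<1}" "s \<in> {0..1}" using s a1 by auto
    define y where "y = g s"
    have fyE: "f y \<in> E"
      using \<epsilon>(2)[OF s01(2) s(3)] r(2) fD[OF gD[OF s01(2)]] by (auto simp: dist_commute y_def)
    have sA: "s \<in> A" using belowA s by simp
    then have fyP: "f y \<in> P y" "f y \<noteq> y" by (auto simp: A_def y_def)
    have s0: "connected (g ` {0..s}) \<and> g ` {0..s} \<subseteq> D - {x} \<and> p \<in> g ` {0..s}"
      using seg0[of s a] s a1 unfolding x_def by auto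
    have "g ` {0..s} \<subseteq> P x" unfolding P_def using s0 by (intro connected_component_maximal) auto
    then have yP: "y \<in> P x" using s by (auto simp: y_def)
    have yE: "y \<notin> E"
    proof
      assume "y \<in> E"
      then have "E = P x" using yP unfolding E_def P_def by (metis connected_component_eq)
      then show False using fxE fxP by simp
    qed
    have yx: "y \<noteq> x" using gneq[of s a] s01 a01 s by (auto simp: x_def y_def)
    define K where "K = insert x E \<union> g ` {a..1}"
    have s1: "connected (g ` {a..1}) \<and> g ` {a..1} \<subseteq> D - {g s} \<and> q \<in> g ` {a..1}"
      using seg1[of s a] s a1 by auto
    have cxE: "connected (insert x E)" unfolding E_def by (rule comp_closure[OF D(3,2) xD fxD])
    have "x \<in> g ` {a..1}" using a1 by (auto simp: x_def)
    then have ne2: "insert x E \<inter> g ` {a..1} \<noteq> {}" by blast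
    have "connected K" unfolding K_def using connected_Un[OF cxE conjunct1[OF s1] ne2] .
    moreover have "K \<subseteq> D - {y}"
    proof -
      have "E \<subseteq> D - {x}" unfolding E_def by (rule connected_component_subset)
      then show ?thesis using xD yx yE s1 by (auto simp: K_def y_def)
    qed
    moreover have "q \<in> K" using s1 by (simp add: K_def)
    ultimately have "K \<subseteq> Q y" unfolding Q_def by (intro connected_component_maximal)
    then have "f y \<in> Q y" using fyE by (auto simp: K_def)
    then show ?thesis using PQdisj[OF s01(1)] fyP by (auto simp: y_def)
  qed
qed


end
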